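(* If $\phi^{\alpha_1\cdots\alpha_n}\in\mathcal F$, then $\dfrac{\partial\phi^{\alpha_1\cdots\alpha_n}}{\partial\mu_\beta}\in\mathcal F$.
   Context: Work in 4-dimensional Minkowski space with metric $g_{\alpha\beta}$ of signature $(-,+,+,+)$; indices are raised and lowered with $g$ and repeated indices are summed. $\lambda$ is a real scalar, $\mu_\beta$ is a time-like covector and $\gamma=\sqrt{-\mu^\alpha\mu_\alpha}>0$. The family $\mathcal F$ consists of the (smooth) Lorentz-covariant (isotropic) tensor-valued functions $\phi^{\alpha_1\cdots\alpha_n}(\lambda,\mu_\beta)$ which are totally symmetric in their indices and whose derivative $\partial\phi^{\alpha_1\cdots\alpha_n}/\partial\mu_\beta$ is totally symmetric in $\alpha_1,\dots,\alpha_n,\beta$. *)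

theory Defs
  imports "HOL-Analysis.Analysis"
begin

text \<open>Minkowski space: indices range over the 4-element type 4, index 0 is the time index.
  Metric g = diag(-1,1,1,1) (its inverse has the same components).\<close>

definition mg :: "4 \<Rightarrow> 4 \<Rightarrow> real" where
  "mg a b = (if a = b then (if a = 0 then -1 else 1) else 0)"

definition mmat :: "real^4^4" where
  "mmat = (\<chi> a b. mg a b)"

definition msq :: "real^4 \<Rightarrow> real" where
  "msq m = (\<Sum>a\<in>UNIV. \<Sum>b\<in>UNIV. mg a b * m $ a * m $ b)"

definition timelike :: "(real^4) set" where
  "timelike = {m. msq m < 0}"

text \<open>Lorentz transformations Lambda^alpha_beta = L $ alpha $ beta:
  Lambda^alpha_gamma g_alpha beta Lambda^beta_delta = g_gamma delta.\<close>
definition lorentz :: "real^4^4 \<Rightarrow> bool" where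
  "lorentz L \<longleftrightarrow> transpose L ** mmat ** L = mmat"

definition cov_transform :: "real^4^4 \<Rightarrow> real^4 \<Rightarrow> real^4" where
  "cov_transform L m = (mmat ** L ** mmat) *v m"

fun Ck_on :: "nat \<Rightarrow> 'a::euclidean_space set \<Rightarrow> ('a \<Rightarrow> real) \<Rightarrow> bool" where
  "Ck_on 0 S f = continuous_on S f"
| "Ck_on (Suc k) S f = (f differentiable_on S \<and>
      (\<forall>v. Ck_on k S (\<lambda>x. frechet_derivative f (at x) v)))"

definition smooth_on :: "'a::euclidean_space set \<Rightarrow> ('a \<Rightarrow> real) \<Rightarrow> bool" where
  "smooth_on S f \<longleftrightarrow> (\<forall>k. Ck_on k S f)"

text \<open>A tensor-valued function phi^{alpha_1...alpha_n}(lambda, mu): the component with upper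
  indices alpha_1..alpha_n is  phi lam mu [alpha_1,...,alpha_n]  (index lists of length n).\<close>
type_synonym tfun = "real \<Rightarrow> real^4 \<Rightarrow> 4 list \<Rightarrow> real"

definition pd_mu :: "tfun \<Rightarrow> 4 list \<Rightarrow> 4 \<Rightarrow> real \<Rightarrow> real^4 \<Rightarrow> real" where
  "pd_mu phi is b l m = deriv (\<lambda>t. phi l (m + t *\<^sub>R axis b 1) is) 0"

text \<open>The derivative tensor d phi^{alpha_1..alpha_n}/d mu_beta, with index list
  [alpha_1,...,alpha_n,beta] (the new index beta is the last one).\<close>
definition dmu :: "tfun \<Rightarrow> tfun" where
  "dmu phi l m js = (if js = [] then 0 else pd_mu phi (butlast js) (last js) l m)"

definition tsym :: "nat \<Rightarrow> tfun \<Rightarrow> bool" where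
  "tsym n phi \<longleftrightarrow> (\<forall>l. \<forall>m\<in>timelike. \<forall>is js. length is = n \<longrightarrow> mset js = mset is \<longrightarrow>
      phi l m js = phi l m is)"

definition lorentz_cov :: "nat \<Rightarrow> tfun \<Rightarrow> bool" where
  "lorentz_cov n phi \<longleftrightarrow> (\<forall>L l m is. lorentz L \<longrightarrow> m \<in> timelike \<longrightarrow> length is = n \<longrightarrow>
      phi l (cov_transform L m) is =
        (\<Sum>js\<in>{js. length js = n}. (\<Prod>k<n. L $ (is ! k) $ (js ! k)) * phi l m js))"

definition famF :: "nat \<Rightarrow> tfun \<Rightarrow> bool" where
  "famF n phi \<longleftrightarrow>
     (\<forall>is. length is = n \<longrightarrow> smooth_on (UNIV \<times> timelike) (\<lambda>(l, m). phi l m is)) \<and>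
     lorentz_cov n phi \<and>
     tsym n phi \<and>
     tsym (Suc n) (dmu phi)"

end

theory Submission
  imports Defs
begin


lemma dir_deriv:
  fixes f :: "'a::real_normed_vector \<Rightarrow> real"
  assumes "(f has_derivative D) (at (x + t *\<^sub>R v))"
  shows "((\<lambda>s. f (x + s *\<^sub>R v)) has_real_derivative D v) (at t)"
proof -
  have l: "linear D" using assms has_derivative_linear by blast
  have "((\<lambda>s. x + s *\<^sub>R v) has_derivative (\<lambda>s. s *\<^sub>R v)) (at t)"
    by (auto intro!: derivative_eq_intros)
  from diff_chain_at[OF this assms]
  have "((\<lambda>s. f (x + s *\<^sub>R v)) has_derivative (\<lambda>s. D (s *\<^sub>R v))) (at t)"
    by (simp add: o_def)
  moreover have "(\<lambda>s. D (s *\<^sub>R v)) = (\<lambda>s. D v * s)"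
    using l by (auto simp: linear_scale)
  ultimately show ?thesis by (simp add: has_field_derivative_def)
qed

lemma mvt2:
  fixes f :: "'a::euclidean_space \<Rightarrow> real"
  assumes S: "open S" and C2: "Ck_on 2 S f"
    and h: "h > 0"
    and box: "\<And>s t. 0 \<le> s \<Longrightarrow> s \<le> h \<Longrightarrow> 0 \<le> t \<Longrightarrow> t \<le> h \<Longrightarrow> x + s *\<^sub>R u + t *\<^sub>R v \<in> S"
  shows "\<exists>\<sigma> \<tau>. 0 < \<sigma> \<and> \<sigma> < h \<and> 0 < \<tau> \<and> \<tau> < h \<and>
     f (x + h *\<^sub>R u + h *\<^sub>R v) - f (x + h *\<^sub>R u) - f (x + h *\<^sub>R v) + f x =
     h * h * frechet_derivative (\<lambda>y. frechet_derivative f (at y) u) (at (x + \<sigma> *\<^sub>R u + \<tau> *\<^sub>R v)) v"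
proof -
  define Df where "Df y = frechet_derivative f (at y)" for y
  define g where "g = (\<lambda>y. frechet_derivative f (at y) u)"
  have fd: "f differentiable_on S" and gd: "g differentiable_on S"
    using C2 by (auto simp: numeral_2_eq_2 g_def)
  have fD: "(f has_derivative Df y) (at y)" if "y \<in> S" for y
    using fd S that by (auto simp: differentiable_on_eq_differentiable_at Df_def frechet_derivative_works)
  have gD: "(g has_derivative frechet_derivative g (at y)) (at y)" if "y \<in> S" for y
    using gd S that by (auto simp: differentiable_on_eq_differentiable_at frechet_derivative_works)
  have lD: "linear (Df y)" if "y \<in> S" for y using fD[OF that] has_derivative_linear by blast
  define \<phi> where "\<phi> s = f (x + s *\<^sub>R u + h *\<^sub>R v) - f (x + s *\<^sub>R u)" for s
  have "(\<phi> has_derivative (\<lambda>d. Df (x + s *\<^sub>R u + h *\<^sub>R v) (d *\<^sub>R u) - Df (x + s *\<^sub>R u) (d *\<^sub>R u))) (at s within {0..h})"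
    if "0 \<le> s" "s \<le> h" for s
  proof -
    have p1: "x + s *\<^sub>R u + h *\<^sub>R v \<in> S" using box that h by auto
    have p0: "x + s *\<^sub>R u \<in> S" using box[of s 0] that h by auto
    have a: "((\<lambda>s. f ((x + h *\<^sub>R v) + s *\<^sub>R u)) has_real_derivative Df (x + s *\<^sub>R u + h *\<^sub>R v) u) (at s)"
      by (rule dir_deriv) (use fD[OF p1] in \<open>simp add: algebra_simps\<close>)
    have b: "((\<lambda>s. f (x + s *\<^sub>R u)) has_real_derivative Df (x + s *\<^sub>R u) u) (at s)"
      by (rule dir_deriv) (use fD[OF p0] in simp)
    have "(\<phi> has_real_derivative Df (x + s *\<^sub>R u + h *\<^sub>R v) u - Df (x + s *\<^sub>R u) u) (at s)"
      unfolding \<phi>_def using DERIV_diff[OF a b] by (simp add: algebra_simps)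
    then have "(\<phi> has_derivative (\<lambda>d. (Df (x + s *\<^sub>R u + h *\<^sub>R v) u - Df (x + s *\<^sub>R u) u) * d)) (at s within {0..h})"
      by (auto simp: has_field_derivative_def intro: has_derivative_at_withinI)
    moreover have "(\<lambda>d. (Df (x + s *\<^sub>R u + h *\<^sub>R v) u - Df (x + s *\<^sub>R u) u) * d) = (\<lambda>d. Df (x + s *\<^sub>R u + h *\<^sub>R v) (d *\<^sub>R u) - Df (x + s *\<^sub>R u) (d *\<^sub>R u))"
      using lD[OF p1] lD[OF p0] by (auto simp: linear_scale algebra_simps)
    ultimately show ?thesis by simp
  qed
  from mvt_simple[OF h this] obtain \<sigma> where \<sigma>: "\<sigma> \<in> {0<..<h}"
    and e1: "\<phi> h - \<phi> 0 = Df (x + \<sigma> *\<^sub>R u + h *\<^sub>R v) ((h-0) *\<^sub>R u) - Df (x + \<sigma> *\<^sub>R u) ((h-0) *\<^sub>R u)"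
    by blast
  have q1: "x + \<sigma> *\<^sub>R u + h *\<^sub>R v \<in> S" using box \<sigma> h by auto
  have q0: "x + \<sigma> *\<^sub>R u \<in> S" using box[of \<sigma> 0] \<sigma> h by auto
  have e1': "\<phi> h - \<phi> 0 = h * (g (x + \<sigma> *\<^sub>R u + h *\<^sub>R v) - g (x + \<sigma> *\<^sub>R u))"
    using e1 lD[OF q1] lD[OF q0] by (simp add: linear_scale g_def Df_def algebra_simps)
  define \<psi> where "\<psi> t = g (x + \<sigma> *\<^sub>R u + t *\<^sub>R v)" for t
  have "(\<psi> has_derivative (\<lambda>d. frechet_derivative g (at (x + \<sigma> *\<^sub>R u + t *\<^sub>R v)) v * d)) (at t within {0..h})"
    if "0 \<le> t" "t \<le> h" for t
  proof -
    have p: "x + \<sigma> *\<^sub>R u + t *\<^sub>R v \<in> S" using box that \<sigma> by auto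
    have "(\<psi> has_real_derivative frechet_derivative g (at (x + \<sigma> *\<^sub>R u + t *\<^sub>R v)) v) (at t)"
      unfolding \<psi>_def by (rule dir_deriv) (use gD[OF p] in simp)
    then show ?thesis
      by (auto simp: has_field_derivative_def intro: has_derivative_at_withinI)
  qed
  from mvt_simple[OF h this] obtain \<tau> where \<tau>: "\<tau> \<in> {0<..<h}"
    and e2: "\<psi> h - \<psi> 0 = frechet_derivative g (at (x + \<sigma> *\<^sub>R u + \<tau> *\<^sub>R v)) v * (h - 0)"
    by blast
  have "f (x + h *\<^sub>R u + h *\<^sub>R v) - f (x + h *\<^sub>R u) - f (x + h *\<^sub>R v) + f x = \<phi> h - \<phi> 0"
    by (simp add: \<phi>_def algebra_simps)
  also have "\<dots> = h * h * frechet_derivative g (at (x + \<sigma> *\<^sub>R u + \<tau> *\<^sub>R v)) v"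
    using e1' e2 by (simp add: \<psi>_def)
  finally show ?thesis using \<sigma> \<tau> unfolding g_def by auto
qed

lemma abs_aux: "\<bar>p - a\<bar> < e \<Longrightarrow> \<bar>p - b\<bar> < e \<Longrightarrow> e = \<bar>a - b\<bar> / 2 \<Longrightarrow> False" for p a b e :: real
proof -
  assume "\<bar>p - a\<bar> < e" "\<bar>p - b\<bar> < e" "e = \<bar>a - b\<bar> / 2"
  moreover have "\<bar>(p - b) - (p - a)\<bar> \<le> \<bar>p - b\<bar> + \<bar>p - a\<bar>" by (rule abs_triangle_ineq4)
  ultimately show False by simp
qed

lemma schwarz:
  fixes f :: "'a::euclidean_space \<Rightarrow> real"
  assumes S: "open S" and C2: "Ck_on 2 S f" and x: "x \<in> S"
  shows "frechet_derivative (\<lambda>y. frechet_derivative f (at y) u) (at x) v =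
         frechet_derivative (\<lambda>y. frechet_derivative f (at y) v) (at x) u"
proof (rule ccontr)
  define H1 where "H1 = (\<lambda>y. frechet_derivative (\<lambda>y. frechet_derivative f (at y) u) (at y) v)"
  define H2 where "H2 = (\<lambda>y. frechet_derivative (\<lambda>y. frechet_derivative f (at y) v) (at y) u)"
  assume ne: "\<not> ?thesis"
  define e where "e = \<bar>H1 x - H2 x\<bar> / 2"
  have e: "e > 0" using ne by (simp add: e_def H1_def H2_def)
  have "continuous_on S H1" "continuous_on S H2"
    using C2 by (auto simp: numeral_2_eq_2 H1_def H2_def)
  then have "isCont H1 x" "isCont H2 x"
    using S x by (auto simp: continuous_on_eq_continuous_at)
  then have c1: "\<forall>\<epsilon>>0. \<exists>\<delta>>0. \<forall>x'. dist x' x < \<delta> \<longrightarrow> dist (H1 x') (H1 x) < \<epsilon>"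
    and c2: "\<forall>\<epsilon>>0. \<exists>\<delta>>0. \<forall>x'. dist x' x < \<delta> \<longrightarrow> dist (H2 x') (H2 x) < \<epsilon>"
    unfolding continuous_at_eps_delta by blast+
  obtain d1 where d1: "d1 > 0" "\<And>y. dist y x < d1 \<Longrightarrow> dist (H1 y) (H1 x) < e"
    using c1 e by blast
  obtain d2 where d2: "d2 > 0" "\<And>y. dist y x < d2 \<Longrightarrow> dist (H2 y) (H2 x) < e"
    using c2 e by blast
  obtain r where r: "r > 0" "ball x r \<subseteq> S" using S x by (meson openE)
  define K where "K = norm u + norm v + 1"
  have K: "K > 0" unfolding K_def using norm_ge_zero[of u] norm_ge_zero[of v] by linarith
  define h where "h = min r (min d1 d2) / (2 * K)"
  have h: "h > 0" using r d1 d2 K by (simp add: h_def)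
  have close: "dist (x + s *\<^sub>R a + t *\<^sub>R b) x < min r (min d1 d2)"
    if "0 \<le> s" "s \<le> h" "0 \<le> t" "t \<le> h" "norm a + norm b + 1 = K" for s t a b
  proof -
    have "dist (x + s *\<^sub>R a + t *\<^sub>R b) x = norm (s *\<^sub>R a + t *\<^sub>R b)"
      by (simp add: dist_norm)
    also have "\<dots> \<le> s * norm a + t * norm b"
      using that norm_triangle_ineq[of "s *\<^sub>R a" "t *\<^sub>R b"] by simp
    also have "\<dots> \<le> h * norm a + h * norm b"
      using that by (intro add_mono mult_right_mono) auto
    also have "\<dots> = h * (K - 1)"
      using that(5)[symmetric] by (simp add: algebra_simps)
    also have "\<dots> < h * (2 * K)"
      using h K by (intro mult_strict_left_mono) auto
    also have "\<dots> = min r (min d1 d2)" using K by (simp add: h_def)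
    finally show ?thesis .
  qed
  have box1: "x + s *\<^sub>R u + t *\<^sub>R v \<in> S" if "0 \<le> s" "s \<le> h" "0 \<le> t" "t \<le> h" for s t
    using close[OF that, of u v] r K_def by (simp add: subset_iff dist_commute)
  have box2: "x + s *\<^sub>R v + t *\<^sub>R u \<in> S" if "0 \<le> s" "s \<le> h" "0 \<le> t" "t \<le> h" for s t
    using close[OF that, of v u] r K_def by (simp add: subset_iff dist_commute add_ac)
  obtain s1 t1 where st1: "0 < s1" "s1 < h" "0 < t1" "t1 < h"
    and E1: "f (x + h *\<^sub>R u + h *\<^sub>R v) - f (x + h *\<^sub>R u) - f (x + h *\<^sub>R v) + f x =
      h * h * H1 (x + s1 *\<^sub>R u + t1 *\<^sub>R v)"
    using mvt2[OF S C2 h box1] unfolding H1_def by blast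
  obtain s2 t2 where st2: "0 < s2" "s2 < h" "0 < t2" "t2 < h"
    and E2: "f (x + h *\<^sub>R v + h *\<^sub>R u) - f (x + h *\<^sub>R v) - f (x + h *\<^sub>R u) + f x =
      h * h * H2 (x + s2 *\<^sub>R v + t2 *\<^sub>R u)"
    using mvt2[OF S C2 h box2] unfolding H2_def by blast
  have "h * h * H1 (x + s1 *\<^sub>R u + t1 *\<^sub>R v) = h * h * H2 (x + s2 *\<^sub>R v + t2 *\<^sub>R u)"
    using E1 E2 by (simp add: algebra_simps)
  then have eq: "H1 (x + s1 *\<^sub>R u + t1 *\<^sub>R v) = H2 (x + s2 *\<^sub>R v + t2 *\<^sub>R u)"
    using h by simp
  have "dist (H1 (x + s1 *\<^sub>R u + t1 *\<^sub>R v)) (H1 x) < e"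
    using d1(2) close[of s1 t1 u v] st1 K_def by simp
  moreover have "dist (H2 (x + s2 *\<^sub>R v + t2 *\<^sub>R u)) (H2 x) < e"
    using d2(2) close[of s2 t2 v u] st2 K_def by (simp add: add_ac)
  ultimately show False using eq e_def abs_aux unfolding dist_real_def by metis
qed

lemma open_timelike: "open timelike"
  unfolding timelike_def msq_def
  by (intro open_Collect_less continuous_intros)

lemma open_S: "open (UNIV \<times> timelike)"
  by (intro open_Times open_timelike open_UNIV)

lemma ev_timelike:
  assumes "m \<in> timelike"
  shows "eventually (\<lambda>t::real. m + t *\<^sub>R w \<in> timelike) (nhds 0)"
proof -
  have "open ((\<lambda>t::real. m + t *\<^sub>R w) -` timelike)"
    by (intro continuous_open_vimage open_timelike) (auto intro!: continuous_intros)
  from eventually_nhds_in_open[OF this] show ?thesis using assms by simp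
qed

lemma deriv_cong_nhds:
  assumes "eventually (\<lambda>t. f t = g t) (nhds (0::real))"
  shows "deriv f 0 = deriv g 0"
proof -
  have "\<And>D. DERIV f 0 :> D \<longleftrightarrow> DERIV g 0 :> D"
    using DERIV_cong_ev[OF refl assms refl] .
  then show ?thesis unfolding deriv_def by simp
qed

lemma pd_has:
  fixes F :: "real \<times> (real^4) \<Rightarrow> real"
  assumes "(F has_derivative D) (at (l, m))"
  shows "((\<lambda>t. F (l, m + t *\<^sub>R e)) has_real_derivative D (0, e)) (at 0)"
proof -
  have "((\<lambda>s. F ((l, m) + s *\<^sub>R (0, e))) has_real_derivative D (0, e)) (at 0)"
    by (rule dir_deriv) (use assms in simp)
  then show ?thesis by simp
qed

lemma pd_eq:
  fixes F :: "real \<times> (real^4) \<Rightarrow> real"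
  assumes "(F has_derivative D) (at (l, m))"
  shows "deriv (\<lambda>t. F (l, m + t *\<^sub>R e)) 0 = D (0, e)"
  using DERIV_imp_deriv[OF pd_has[OF assms]] .

lemma Ck_on_cong:
  assumes "open S" "\<And>x. x \<in> S \<Longrightarrow> f x = g x"
  shows "Ck_on k S f = Ck_on k S g"
  using assms(2)
proof (induction k arbitrary: f g)
  case 0
  then show ?case by (simp only: Ck_on.simps) (rule continuous_on_cong[OF refl], simp)
next
  case (Suc k)
  have hd: "(f has_derivative D) (at x) \<longleftrightarrow> (g has_derivative D) (at x)" if "x \<in> S" for x D
  proof
    assume "(f has_derivative D) (at x)"
    from has_derivative_transform_within_open[OF this assms(1) that] Suc.prems
    show "(g has_derivative D) (at x)" by blast
  next
    assume "(g has_derivative D) (at x)"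
    from has_derivative_transform_within_open[OF this assms(1) that] Suc.prems
    show "(f has_derivative D) (at x)" by (metis)
  qed
  have "f differentiable_on S \<longleftrightarrow> g differentiable_on S"
    unfolding differentiable_on_eq_differentiable_at[OF assms(1)] differentiable_def using hd by blast
  moreover have "frechet_derivative f (at x) = frechet_derivative g (at x)" if "x \<in> S" for x
    unfolding frechet_derivative_def using hd[OF that] by simp
  then have "Ck_on k S (\<lambda>x. frechet_derivative f (at x) v) = Ck_on k S (\<lambda>x. frechet_derivative g (at x) v)" for v
    by (intro Suc.IH) auto
  ultimately show ?case by simp
qed

lemma smooth_cong:
  assumes "open S" "\<And>x. x \<in> S \<Longrightarrow> f x = g x" "smooth_on S f"
  shows "smooth_on S g"
proof -
  have "Ck_on k S f = Ck_on k S g" for k by (rule Ck_on_cong[OF assms(1,2)])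
  then show ?thesis using assms(3) unfolding smooth_on_def by blast
qed

lemma smooth_deriv:
  assumes "smooth_on S f"
  shows "smooth_on S (\<lambda>x. frechet_derivative f (at x) v)"
  unfolding smooth_on_def
proof
  fix k
  have "Ck_on (Suc k) S f" using assms unfolding smooth_on_def by blast
  then show "Ck_on k S (\<lambda>x. frechet_derivative f (at x) v)" by simp
qed

lemma smooth_has:
  assumes "open S" "smooth_on S f" "x \<in> S"
  shows "(f has_derivative frechet_derivative f (at x)) (at x)"
proof -
  have "Ck_on 1 S f" using assms(2) unfolding smooth_on_def by blast
  then have "f differentiable_on S" by simp
  then have "f differentiable (at x)"
    using assms(1,3) differentiable_on_eq_differentiable_at by blast
  then show ?thesis using frechet_derivative_works by blast
qed

lemma perm_aux:
  fixes P :: "'a list \<Rightarrow> real"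
  assumes A: "\<And>xs ys c. length xs = Suc n \<Longrightarrow> mset ys = mset xs \<Longrightarrow> P (ys @ [c]) = P (xs @ [c])"
    and B: "\<And>xs b c. length xs = n \<Longrightarrow> P (xs @ [b, c]) = P (xs @ [c, b])"
    and len: "length iss = Suc (Suc n)" and ms: "mset js = mset iss"
  shows "P js = P iss"
proof -
  have "iss \<noteq> []" using len by auto
  then obtain xs c where iss: "iss = xs @ [c]" by (metis append_butlast_last_id)
  have "length js = length iss" using ms by (rule mset_eq_length)
  then have "js \<noteq> []" using len by auto
  then obtain ys d where js: "js = ys @ [d]" by (metis append_butlast_last_id)
  have lxs: "length xs = Suc n" using len iss by simp
  have m1: "mset ys + {#d#} = mset xs + {#c#}" using ms iss js by simp
  show ?thesis
  proof (cases "c = d")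
    case True
    then have "mset ys = mset xs" using m1 by simp
    then have "P (ys @ [c]) = P (xs @ [c])" by (rule A[OF lxs])
    then show ?thesis using iss js True by simp
  next
    case False
    have "c \<in># mset ys + {#d#}" using m1 by simp
    then have cy: "c \<in> set ys" using False by simp
    define zs where "zs = remove1 c ys"
    have mz: "mset ys = mset (zs @ [c])" using cy by (simp add: zs_def)
    have lzs: "length zs = n"
    proof -
      have "length ys = length xs" using arg_cong[OF m1, of size] by simp
      then show ?thesis using cy lxs by (simp add: zs_def length_remove1)
    qed
    have "P (ys @ [d]) = P ((zs @ [c]) @ [d])" by (rule A) (use lzs mz in simp_all)
    then have "P js = P ((zs @ [c]) @ [d])" using js by simp
    also have "\<dots> = P ((zs @ [d]) @ [c])" using B[OF lzs, of c d] by simp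
    also have "\<dots> = P (xs @ [c])"
    proof (rule A)
      show "length xs = Suc n" by (rule lxs)
      show "mset (zs @ [d]) = mset xs" using m1 mz by simp
    qed
    finally show ?thesis using iss by simp
  qed
qed



lemma mmat_sq: "mmat ** mmat = mat 1"
proof -
  have "(\<Sum>k\<in>UNIV. mg i k * mg k j) = (if i = j then 1 else 0)" for i j
  proof -
    have h: "\<And>k. mg i k * mg k j = (if k = i then mg i i * mg i j else 0)"
      by (simp add: mg_def)
    have "(\<Sum>k\<in>UNIV. mg i k * mg k j) = (\<Sum>k\<in>UNIV. if k = i then mg i i * mg i j else 0)"
      by (rule sum.cong[OF refl], rule h)
    also have "\<dots> = mg i i * mg i j"
      by (rule trans[OF sum.delta]) simp_all
    also have "\<dots> = (if i = j then 1 else 0)" by (simp add: mg_def)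
    finally show ?thesis .
  qed
  then have "(mmat ** mmat) $ i $ j = mat 1 $ i $ j" for i j
    by (simp only: matrix_matrix_mult_def mmat_def mat_def vec_lambda_beta)
  then show ?thesis by (intro vec_eq_iff[THEN iffD2] allI)
qed

lemma mmat_T: "transpose mmat = mmat"
proof -
  have "transpose mmat $ i $ j = mmat $ i $ j" for i j
    by (simp only: transpose_def mmat_def vec_lambda_beta mg_def) auto
  then show ?thesis by (intro vec_eq_iff[THEN iffD2] allI)
qed

lemma lorentz_inv:
  assumes "lorentz L"
  shows "(mmat ** L ** mmat) ** transpose L = mat 1"
proof -
  have h: "transpose L ** mmat ** L = mmat" using assms unfolding lorentz_def by simp
  have "(mmat ** transpose L ** mmat) ** L = mmat ** (transpose L ** mmat ** L)"
    by (simp add: matrix_mul_assoc)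
  also have "\<dots> = mat 1" using h mmat_sq by simp
  finally have "L ** (mmat ** transpose L ** mmat) = mat 1"
    using matrix_left_right_inverse by blast
  then have "L ** (mmat ** transpose L ** mmat) ** mmat = mmat" by simp
  moreover have "L ** (mmat ** transpose L ** mmat) ** mmat = L ** mmat ** transpose L"
    by (simp add: matrix_mul_assoc[symmetric] mmat_sq)
  ultimately have h2: "L ** mmat ** transpose L = mmat" by simp
  have "(mmat ** L ** mmat) ** transpose L = mmat ** (L ** mmat ** transpose L)"
    by (simp add: matrix_mul_assoc)
  also have "\<dots> = mat 1" using h2 mmat_sq by simp
  finally show ?thesis .
qed

lemma sum_lists_Suc:
  fixes G :: "'a::finite list \<Rightarrow> real"
  shows "(\<Sum>js\<in>{js. length js = Suc n}. G js) = (\<Sum>xs\<in>{xs. length xs = n}. \<Sum>b\<in>UNIV. G (xs @ [b]))"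
proof -
  have e: "{js :: 'a list. length js = Suc n} = (\<lambda>(xs, b). xs @ [b]) ` ({xs. length xs = n} \<times> UNIV)"
  proof (intro set_eqI iffI)
    fix js :: "'a list" assume "js \<in> {js. length js = Suc n}"
    then have "js = butlast js @ [last js]" "length (butlast js) = n"
      by (auto intro: append_butlast_last_id[symmetric])
    then show "js \<in> (\<lambda>(xs, b). xs @ [b]) ` ({xs. length xs = n} \<times> UNIV)"
      by (metis (mono_tags, lifting) UNIV_I case_prod_conv image_eqI mem_Collect_eq mem_Sigma_iff)
  next
    fix js :: "'a list" assume "js \<in> (\<lambda>(xs, b). xs @ [b]) ` ({xs. length xs = n} \<times> UNIV)"
    then show "js \<in> {js. length js = Suc n}" by auto
  qed
  have i: "inj_on (\<lambda>(xs, b). xs @ [b]) ({xs::'a list. length xs = n} \<times> UNIV)"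
    by (auto simp: inj_on_def)
  show ?thesis
    unfolding e sum.reindex[OF i]
    by (simp add: sum.cartesian_product split_def)
qed

lemma cov_step:
  assumes F: "famF n phi" and L: "lorentz L" and m: "m \<in> timelike" and len: "length iss = n"
  shows "dmu phi l (cov_transform L m) (iss @ [c]) =
    (\<Sum>js\<in>{js. length js = Suc n}. (\<Prod>k<Suc n. L $ ((iss @ [c]) ! k) $ (js ! k)) * dmu phi l m js)"
proof -
  define M where "M = mmat ** L ** mmat"
  define w :: "real^4" where "w = (\<chi> b. L $ c $ b)"
  have w': "w = transpose L *v axis c 1"
    by (simp add: w_def vec_eq_iff matrix_vector_mult_def transpose_def axis_def mult.commute[of "L $ _ $ _"] mult_if_delta)
  have Mw: "M *v w = axis c 1"
    unfolding w' matrix_vector_mul_assoc M_def lorentz_inv[OF L] by simp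
  have ct: "cov_transform L (m + t *\<^sub>R w) = cov_transform L m + t *\<^sub>R axis c 1" for t
    unfolding cov_transform_def M_def[symmetric]
    by (simp add: matrix_vector_right_distrib matrix_vector_mult_scaleR Mw)
  define J where "J = {js :: 4 list. length js = n}"
  have finJ: "finite J" unfolding J_def using finite_lists_length_eq[OF finite[of "UNIV::4 set"], of n] by simp
  define P where "P js = (\<Prod>k<n. L $ (iss ! k) $ (js ! k))" for js
  define D where "D js = frechet_derivative (\<lambda>(l, m). phi l m js) (at (l, m))" for js
  have sm: "smooth_on (UNIV \<times> timelike) (\<lambda>(l, m). phi l m js)" if "js \<in> J" for js
    using F that unfolding famF_def J_def by blast
  have hasD: "((\<lambda>(l, m). phi l m js) has_derivative D js) (at (l, m))" if "js \<in> J" for js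
    unfolding D_def by (rule smooth_has[OF open_S sm[OF that]]) (use m in simp)
  have linD: "linear (D js)" if "js \<in> J" for js using hasD[OF that] has_derivative_linear by blast
  have cov: "phi l (cov_transform L y) iss = (\<Sum>js\<in>J. P js * phi l y js)" if "y \<in> timelike" for y
    using F L that len unfolding famF_def lorentz_cov_def J_def P_def by blast
  have "dmu phi l (cov_transform L m) (iss @ [c]) = deriv (\<lambda>t. phi l (cov_transform L m + t *\<^sub>R axis c 1) iss) 0"
    by (simp add: dmu_def pd_mu_def)
  also have "\<dots> = deriv (\<lambda>t. \<Sum>js\<in>J. P js * phi l (m + t *\<^sub>R w) js) 0"
  proof (rule deriv_cong_nhds)
    show "\<forall>\<^sub>F t in nhds 0. phi l (cov_transform L m + t *\<^sub>R axis c 1) iss = (\<Sum>js\<in>J. P js * phi l (m + t *\<^sub>R w) js)"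
      using ev_timelike[OF m, of w]
      by eventually_elim (simp add: cov ct[symmetric])
  qed
  also have "\<dots> = (\<Sum>js\<in>J. P js * D js (0, w))"
  proof (rule DERIV_imp_deriv)
    show "((\<lambda>t. \<Sum>js\<in>J. P js * phi l (m + t *\<^sub>R w) js) has_real_derivative (\<Sum>js\<in>J. P js * D js (0, w))) (at 0)"
    proof (rule DERIV_sum, rule DERIV_cmult)
      fix js assume "js \<in> J"
      from pd_has[OF hasD[OF this], of w]
      show "((\<lambda>t. phi l (m + t *\<^sub>R w) js) has_real_derivative D js (0, w)) (at 0)" by simp
    qed
  qed
  also have "\<dots> = (\<Sum>js\<in>J. P js * (\<Sum>b\<in>UNIV. L $ c $ b * D js (0, axis b 1)))"
  proof (rule sum.cong[OF refl])
    fix js assume js: "js \<in> J"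
    have eq: "(0::real, w) = (\<Sum>b\<in>UNIV. (L $ c $ b) *\<^sub>R (0::real, axis b 1))"
    proof -
      have "w = (\<Sum>b\<in>UNIV. (L $ c $ b) *\<^sub>R axis b (1::real))"
        using basis_expansion[of w] by (simp add: scalar_mult_eq_scaleR w_def)
      then show ?thesis by (simp add: prod_eq_iff fst_sum snd_sum)
    qed
    have "D js (0, w) = (\<Sum>b\<in>UNIV. D js ((L $ c $ b) *\<^sub>R (0::real, axis b 1)))"
      by (subst eq) (rule linear_sum[OF linD[OF js]])
    also have "\<dots> = (\<Sum>b\<in>UNIV. L $ c $ b * D js (0, axis b 1))"
      by (simp only: linear_scale[OF linD[OF js]] real_scaleR_def)
    finally show "P js * D js (0, w) = P js * (\<Sum>b\<in>UNIV. L $ c $ b * D js (0, axis b 1))" by simp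
  qed
  also have "\<dots> = (\<Sum>js\<in>J. \<Sum>b\<in>UNIV. (\<Prod>k<Suc n. L $ ((iss @ [c]) ! k) $ ((js @ [b]) ! k)) * dmu phi l m (js @ [b]))"
  proof (rule sum.cong[OF refl])
    fix js assume js: "js \<in> J"
    have lj: "length js = n" using js by (simp add: J_def)
    show "P js * (\<Sum>b\<in>UNIV. L $ c $ b * D js (0, axis b 1)) =
      (\<Sum>b\<in>UNIV. (\<Prod>k<Suc n. L $ ((iss @ [c]) ! k) $ ((js @ [b]) ! k)) * dmu phi l m (js @ [b]))"
      unfolding sum_distrib_left
    proof (rule sum.cong[OF refl])
      fix b :: 4
      have "(\<Prod>k<Suc n. L $ ((iss @ [c]) ! k) $ ((js @ [b]) ! k)) = P js * L $ c $ b"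
        unfolding prod.lessThan_Suc P_def using len lj by (auto simp: nth_append intro!: prod.cong)
      moreover have "dmu phi l m (js @ [b]) = D js (0, axis b 1)"
        using pd_eq[OF hasD[OF js], of "axis b 1"] by (simp add: dmu_def pd_mu_def)
      ultimately show "P js * (L $ c $ b * D js (0, axis b 1)) =
        (\<Prod>k<Suc n. L $ ((iss @ [c]) ! k) $ ((js @ [b]) ! k)) * dmu phi l m (js @ [b])"
        by simp
    qed
  qed
  also have "\<dots> = (\<Sum>js\<in>{js. length js = Suc n}. (\<Prod>k<Suc n. L $ ((iss @ [c]) ! k) $ (js ! k)) * dmu phi l m js)"
    unfolding J_def by (rule sum_lists_Suc[symmetric])
  finally show ?thesis .
qed

lemma dmu_app: "dmu psi l m (xs @ [c]) = pd_mu psi xs c l m"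
  by (simp add: dmu_def)

lemma dd_eq:
  assumes F: "famF n phi" and len: "length xs = n" and m: "m \<in> timelike"
  shows "dmu (dmu phi) l m (xs @ [b, c]) =
    frechet_derivative (\<lambda>p. frechet_derivative (\<lambda>(l, m). phi l m xs) (at p) (0, axis b 1)) (at (l, m)) (0, axis c 1)"
proof -
  define f where "f = (\<lambda>(l, m). phi l m xs)"
  define g where "g = (\<lambda>p. frechet_derivative f (at p) (0::real, axis b (1::real)))"
  have sm: "smooth_on (UNIV \<times> timelike) f" using F len unfolding famF_def f_def by blast
  have smg: "smooth_on (UNIV \<times> timelike) g" unfolding g_def by (rule smooth_deriv[OF sm])
  have hasf: "(f has_derivative frechet_derivative f (at (l, y))) (at (l, y))" if "y \<in> timelike" for y
    by (rule smooth_has[OF open_S sm]) (use that in simp)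
  have hasg: "(g has_derivative frechet_derivative g (at (l, m))) (at (l, m))"
    by (rule smooth_has[OF open_S smg]) (use m in simp)
  have "dmu (dmu phi) l m (xs @ [b, c]) = deriv (\<lambda>t. dmu phi l (m + t *\<^sub>R axis c 1) (xs @ [b])) 0"
    using dmu_app[of "dmu phi" l m "xs @ [b]" c] by (simp add: pd_mu_def)
  also have "\<dots> = deriv (\<lambda>t. g (l, m + t *\<^sub>R axis c 1)) 0"
  proof (rule deriv_cong_nhds)
    show "\<forall>\<^sub>F t in nhds 0. dmu phi l (m + t *\<^sub>R axis c 1) (xs @ [b]) = g (l, m + t *\<^sub>R axis c 1)"
      using ev_timelike[OF m, of "axis c 1"]
    proof eventually_elim
      case (elim t)
      have "dmu phi l (m + t *\<^sub>R axis c 1) (xs @ [b]) = deriv (\<lambda>s. f (l, (m + t *\<^sub>R axis c 1) + s *\<^sub>R axis b 1)) 0"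
        by (simp add: dmu_app pd_mu_def f_def)
      also have "\<dots> = g (l, m + t *\<^sub>R axis c 1)"
        unfolding g_def by (rule pd_eq[OF hasf[OF elim]])
      finally show ?case .
    qed
  qed
  also have "\<dots> = frechet_derivative g (at (l, m)) (0, axis c 1)"
    by (rule pd_eq[OF hasg])
  finally show ?thesis unfolding g_def f_def .
qed

theorem proposition2:
  fixes phi :: tfun and n :: nat
  assumes "famF n phi"
  shows "famF (Suc n) (dmu phi)"
proof -
  note F = assms
  have ts1: "tsym (Suc n) (dmu phi)" using F unfolding famF_def by (elim conjE)
  have smooth: "smooth_on (UNIV \<times> timelike) (\<lambda>(l, m). dmu phi l m iss)" if len1: "length iss = Suc n" for iss
  proof -
    obtain xs b where iss: "iss = xs @ [b]" by (cases iss rule: rev_cases) (use len1 in auto)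
    have len: "length xs = n" using len1 iss by simp
    define f where "f = (\<lambda>(l, m). phi l m xs)"
    have sm: "smooth_on (UNIV \<times> timelike) f" using F len unfolding famF_def f_def by blast
    show ?thesis
    proof (rule smooth_cong[OF open_S _ smooth_deriv[OF sm, of "(0, axis b 1)"]])
      fix p :: "real \<times> (real^4)" assume p: "p \<in> UNIV \<times> timelike"
      obtain l m where pe: "p = (l, m)" by fastforce
      have "dmu phi l m iss = deriv (\<lambda>s. f (l, m + s *\<^sub>R axis b 1)) 0"
        by (simp add: iss dmu_app pd_mu_def f_def)
      also have "\<dots> = frechet_derivative f (at (l, m)) (0, axis b 1)"
        by (rule pd_eq[OF smooth_has[OF open_S sm]]) (use p pe in simp)
      finally show "frechet_derivative f (at p) (0, axis b 1) = (\<lambda>(l, m). dmu phi l m iss) p"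
        using pe by simp
    qed
  qed
  have cov: "lorentz_cov (Suc n) (dmu phi)"
    unfolding lorentz_cov_def
  proof (intro allI impI)
    fix L l m iss
    assume L: "lorentz L" and m: "m \<in> timelike" and l: "length (iss :: 4 list) = Suc n"
    obtain xs c where iss: "iss = xs @ [c]" by (cases iss rule: rev_cases) (use l in auto)
    have len: "length xs = n" using l iss by simp
    show "dmu phi l (cov_transform L m) iss =
       (\<Sum>js\<in>{js. length js = Suc n}. (\<Prod>k<Suc n. L $ (iss ! k) $ (js ! k)) * dmu phi l m js)"
      unfolding iss by (rule cov_step[OF F L m len])
  qed
  have ts2: "tsym (Suc (Suc n)) (dmu (dmu phi))"
    unfolding tsym_def
  proof (intro allI ballI impI)
    fix l m iss js
    assume m: "m \<in> timelike" and l: "length (iss :: 4 list) = Suc (Suc n)" and ms: "mset js = mset iss"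
    show "dmu (dmu phi) l m js = dmu (dmu phi) l m iss"
    proof (rule perm_aux[OF _ _ l ms])
      fix xs ys :: "4 list" and c
      assume lx: "length xs = Suc n" and my: "mset ys = mset xs"
      have sym: "dmu phi l y ys = dmu phi l y xs" if "y \<in> timelike" for y
        using ts1 lx my that unfolding tsym_def by blast
      show "dmu (dmu phi) l m (ys @ [c]) = dmu (dmu phi) l m (xs @ [c])"
        unfolding dmu_app pd_mu_def
      proof (rule deriv_cong_nhds)
        show "\<forall>\<^sub>F t in nhds 0. dmu phi l (m + t *\<^sub>R axis c 1) ys = dmu phi l (m + t *\<^sub>R axis c 1) xs"
          using ev_timelike[OF m, of "axis c 1"]
          by eventually_elim (rule sym)
      qed
    next
      fix xs :: "4 list" and b c
      assume lx: "length xs = n"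
      define f where "f = (\<lambda>(l, m). phi l m xs)"
      have sm: "smooth_on (UNIV \<times> timelike) f" using F lx unfolding famF_def f_def by blast
      then have C2: "Ck_on 2 (UNIV \<times> timelike) f" unfolding smooth_on_def by blast
      show "dmu (dmu phi) l m (xs @ [b, c]) = dmu (dmu phi) l m (xs @ [c, b])"
        unfolding dd_eq[OF F lx m] f_def[symmetric]
        by (rule schwarz[OF open_S C2]) (use m in simp)
    qed
  qed
  show ?thesis unfolding famF_def by (intro conjI allI impI cov ts1 ts2 smooth)
qed


end
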